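(* For every $U\in\mathcal{U}(d)$ and every anti-Hermitian $K$ ($K^\dagger=-K$) with $\|K\|_F=1$, $\Big|\frac{d}{dt}H_2(e^{tK}U)\Big|_{t=0}\Big|\le\frac{8}{\sqrt d}$.
   Context: On $\mathbb{C}^{d_L}$ let $Z|k\rangle=\omega^k|k\rangle$, $X|k\rangle=|k+1\rangle$ (mod $d_L$), $\omega=e^{2\pi i/d_L}$, $\tau=-e^{i\pi/d_L}$, $D_{(a_1,a_2)}=\tau^{a_1a_2}X^{a_1}Z^{a_2}$, and for $\mathbf a=\mathbf a_1\oplus\cdots\oplus\mathbf a_n\in\mathbb{Z}_{d_L}^{2n}$ let $D_{\mathbf a}=D_{\mathbf a_1}\otimes\cdots\otimes D_{\mathbf a_n}$ acting on $\mathbb{C}^d$, $d=d_L^n$. The 2-Clifford entropy of a unitary $U$ is $H_2(U)=1-\frac{1}{d^6}\sum_{\mathbf a,\mathbf b}\big|\operatorname{tr}(D_{\mathbf a}^\dagger UD_{\mathbf b}U^\dagger)\big|^4$. $\|K\|_F=\sqrt{\operatorname{tr}(K^\dagger K)}$. *)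

theory Defs
  imports "HOL-Analysis.Analysis" "Jordan_Normal_Form.Schur_Decomposition"
begin

text \<open>Computational basis of (C^dL)^{\<otimes> n}: index k < dL^n, j-th qudit digit is
  (k div dL^j) mod dL (mixed radix encoding).\<close>
definition digit :: "nat \<Rightarrow> nat \<Rightarrow> nat \<Rightarrow> nat" where
  "digit dL k j = (k div dL ^ j) mod dL"

definition omega :: "nat \<Rightarrow> complex" where
  "omega dL = cis (2 * pi / real dL)"

definition tau :: "nat \<Rightarrow> complex" where
  "tau dL = - cis (pi / real dL)"

text \<open>Matrix entry (r,c) of the single-qudit operator D_(a1,a2) = tau^(a1 a2) X^a1 Z^a2,
  where X^a1 Z^a2 |c> = omega^(a2 c) |c + a1 mod dL>.\<close>
definition D1 :: "nat \<Rightarrow> nat \<Rightarrow> nat \<Rightarrow> nat \<Rightarrow> nat \<Rightarrow> complex" where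
  "D1 dL a1 a2 r c =
     (if r = (c + a1) mod dL then tau dL ^ (a1 * a2) * omega dL ^ (a2 * c) else 0)"

text \<open>Multi-qudit Weyl operator D_a, a = a_1 \<oplus> ... \<oplus> a_n, a_j = (a1_j, a2_j);
  the vectors (a1_j)_j and (a2_j)_j in Z_dL^n are encoded by their digits in the
  numbers A1, A2 < dL^n.\<close>
definition Dop :: "nat \<Rightarrow> nat \<Rightarrow> nat \<Rightarrow> nat \<Rightarrow> complex mat" where
  "Dop dL n A1 A2 = mat (dL ^ n) (dL ^ n)
     (\<lambda>(r, c). \<Prod>j<n. D1 dL (digit dL A1 j) (digit dL A2 j) (digit dL r j) (digit dL c j))"

definition mtrace :: "complex mat \<Rightarrow> complex" where
  "mtrace A = (\<Sum>i<dim_row A. A $$ (i, i))"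

definition frob_norm :: "complex mat \<Rightarrow> real" where
  "frob_norm K = sqrt (Re (mtrace (mat_adjoint K * K)))"

definition unitary_mat :: "nat \<Rightarrow> complex mat \<Rightarrow> bool" where
  "unitary_mat d U \<longleftrightarrow> U \<in> carrier_mat d d \<and> U * mat_adjoint U = 1\<^sub>m d
      \<and> mat_adjoint U * U = 1\<^sub>m d"

definition mat_exp :: "complex mat \<Rightarrow> complex mat" where
  "mat_exp A = mat (dim_row A) (dim_col A)
     (\<lambda>(i, j). \<Sum>m. (A ^\<^sub>m m) $$ (i, j) / of_nat (fact m))"

definition H2 :: "nat \<Rightarrow> nat \<Rightarrow> complex mat \<Rightarrow> real" where
  "H2 dL n U = 1 - 1 / real (dL ^ n) ^ 6 *
     (\<Sum>A1<dL^n. \<Sum>A2<dL^n. \<Sum>B1<dL^n. \<Sum>B2<dL^n.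
        cmod (mtrace (mat_adjoint (Dop dL n A1 A2) * U * Dop dL n B1 B2 * mat_adjoint U)) ^ 4)"

end

theory Submission
  imports Defs
begin

declare carrier_matD[simp del]


lemma adj_dims[simp]: "dim_row (mat_adjoint A) = dim_col A" "dim_col (mat_adjoint A) = dim_row A"
  by (auto simp: mat_adjoint_def)

lemma adj_index[simp]: "i < dim_col A \<Longrightarrow> j < dim_row A \<Longrightarrow> mat_adjoint A $$ (i,j) = cnj (A $$ (j,i))"
  by (auto simp: mat_adjoint_def mat_of_rows_def)

lemma adj_carrier: "A \<in> carrier_mat n m \<Longrightarrow> mat_adjoint A \<in> carrier_mat m n"
  unfolding carrier_mat_def by simp

lemma mult_index: assumes "A \<in> carrier_mat n m" "B \<in> carrier_mat m k" "i < n" "j < k"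
  shows "(A * B) $$ (i,j) = (\<Sum>l<m. A $$ (i,l) * B $$ (l,j))"
proof -
  have d: "dim_row A = n" "dim_col A = m" "dim_row B = m" "dim_col B = k" using assms(1,2) by auto
  have "(A * B) $$ (i,j) = row A i \<bullet> col B j" using assms(3,4) d by simp
  also have "\<dots> = (\<Sum>l\<in>{0..<m}. row A i $ l * col B j $ l)" by (simp add: scalar_prod_def d)
  also have "\<dots> = (\<Sum>l<m. A $$ (i,l) * B $$ (l,j))"
    by (rule sum.cong) (use assms(3,4) d in auto)
  finally show ?thesis .
qed

lemma adj_adj: "mat_adjoint (mat_adjoint A) = (A::complex mat)"
proof (rule eq_matI)
  fix i j assume "i < dim_row A" "j < dim_col A"
  then show "mat_adjoint (mat_adjoint A) $$ (i, j) = A $$ (i, j)"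
    using adj_index[of i "mat_adjoint A" j] adj_index[of j A i] by simp
qed auto

lemma adj_mult: fixes A B :: "complex mat" assumes "A \<in> carrier_mat n m" "B \<in> carrier_mat m k" shows
   "mat_adjoint (A * B) = mat_adjoint B * mat_adjoint A"
proof (rule eq_matI)
  have d: "dim_row A = n" "dim_col A = m" "dim_row B = m" "dim_col B = k" using assms(1,2) by auto
  fix i j assume ij: "i < dim_row (mat_adjoint B * mat_adjoint A)" "j < dim_col (mat_adjoint B * mat_adjoint A)"
  then have i: "i < k" and j: "j < n" using d by auto
  have "mat_adjoint (A * B) $$ (i, j) = cnj ((A*B) $$ (j,i))"
    using i j d by (intro adj_index) auto
  also have "\<dots> = cnj (\<Sum>l<m. A $$ (j,l) * B $$ (l,i))"
    using i j assms by (simp only: mult_index[of A n m B k j i])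
  also have "\<dots> = (\<Sum>l<m. cnj (B $$ (l,i)) * cnj (A $$ (j,l)))"
    by (simp only: cnj_sum complex_cnj_mult mult.commute)
  also have "\<dots> = (\<Sum>l<m. mat_adjoint B $$ (i,l) * mat_adjoint A $$ (l,j))"
  proof (rule sum.cong)
    fix l assume "l \<in> {..<m}"
    then show "cnj (B $$ (l,i)) * cnj (A $$ (j,l)) = mat_adjoint B $$ (i,l) * mat_adjoint A $$ (l,j)"
      using i j d adj_index[of i B l] adj_index[of l A j] by simp
  qed simp
  also have "\<dots> = (mat_adjoint B * mat_adjoint A) $$ (i,j)"
    using i j assms by (simp only: mult_index[of "mat_adjoint B" k m "mat_adjoint A" n i j] adj_carrier)
  finally show "mat_adjoint (A * B) $$ (i, j) = (mat_adjoint B * mat_adjoint A) $$ (i,j)" .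
qed simp_all

lemma mtrace_sq: "A \<in> carrier_mat d d \<Longrightarrow> mtrace A = (\<Sum>i<d. A $$ (i,i))"
  unfolding mtrace_def carrier_mat_def by simp

lemma mul_cnj: "z * cnj z = (complex_of_real (cmod z))^2"
  by (simp add: complex_norm_square[symmetric])

lemma cnj_mul: "cnj z * z = (complex_of_real (cmod z))^2"
  by (simp add: complex_norm_square[symmetric] mult.commute)

definition SQ :: "nat \<Rightarrow> (nat \<times> nat) set" where "SQ d = {..<d} \<times> {..<d}"

lemma finite_SQ[simp]: "finite (SQ d)" by (simp add: SQ_def)

definition hs :: "nat \<Rightarrow> complex mat \<Rightarrow> complex mat \<Rightarrow> complex" where
  "hs d A B = (\<Sum>p\<in>SQ d. cnj (A $$ p) * B $$ p)"

definition fro2 :: "nat \<Rightarrow> complex mat \<Rightarrow> real" where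
  "fro2 d A = (\<Sum>p\<in>SQ d. (cmod (A $$ p))^2)"

lemma sum_SQ: "(\<Sum>p\<in>SQ d. f p) = (\<Sum>i<d. \<Sum>j<d. f (i,j))"
  unfolding SQ_def by (simp add: sum.cartesian_product)

lemma trace_adj_mult: assumes "A \<in> carrier_mat d d" "X \<in> carrier_mat d d"
  shows "mtrace (mat_adjoint A * X) = hs d A X"
proof -
  have dd: "dim_row A = d" "dim_col A = d" "dim_row X = d" "dim_col X = d" using assms by auto
  have "mtrace (mat_adjoint A * X) = (\<Sum>i<d. (mat_adjoint A * X) $$ (i,i))"
    using dd by (simp add: mtrace_def)
  also have "\<dots> = (\<Sum>i<d. \<Sum>l<d. cnj (A $$ (l,i)) * X $$ (l,i))"
  proof (rule sum.cong)
    fix i assume i: "i \<in> {..<d}"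
    have "(mat_adjoint A * X) $$ (i,i) = (\<Sum>l<d. mat_adjoint A $$ (i,l) * X $$ (l,i))"
      using i assms by (intro mult_index[of _ d d _ d]) (auto intro: adj_carrier)
    also have "\<dots> = (\<Sum>l<d. cnj (A $$ (l,i)) * X $$ (l,i))"
      by (rule sum.cong) (use i dd in auto)
    finally show "(mat_adjoint A * X) $$ (i,i) = (\<Sum>l<d. cnj (A $$ (l,i)) * X $$ (l,i))" .
  qed simp
  also have "\<dots> = (\<Sum>l<d. \<Sum>i<d. cnj (A $$ (l,i)) * X $$ (l,i))"
    by (rule sum.swap)
  also have "\<dots> = hs d A X" unfolding hs_def sum_SQ by simp
  finally show ?thesis .
qed

lemma trace_mult_adj: assumes "A \<in> carrier_mat d d"
  shows "mtrace (A * mat_adjoint A) = of_real (fro2 d A)"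
proof -
  have dd: "dim_row A = d" "dim_col A = d" using assms by auto
  have "mtrace (A * mat_adjoint A) = (\<Sum>i<d. (A * mat_adjoint A) $$ (i,i))"
    using dd by (simp add: mtrace_def)
  also have "\<dots> = (\<Sum>i<d. \<Sum>l<d. of_real ((cmod (A $$ (i,l)))^2))"
  proof (rule sum.cong)
    fix i assume i: "i \<in> {..<d}"
    have "(A * mat_adjoint A) $$ (i,i) = (\<Sum>l<d. A $$ (i,l) * mat_adjoint A $$ (l,i))"
      using i assms by (intro mult_index[of _ d d _ d]) (auto intro: adj_carrier)
    also have "\<dots> = (\<Sum>l<d. of_real ((cmod (A $$ (i,l)))^2))"
      by (rule sum.cong) (use i dd in \<open>auto simp: mul_cnj\<close>)
    finally show "(A * mat_adjoint A) $$ (i,i) = (\<Sum>l<d. of_real ((cmod (A $$ (i,l)))^2))" .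
  qed simp
  also have "\<dots> = of_real (fro2 d A)" unfolding fro2_def sum_SQ by simp
  finally show ?thesis .
qed

lemma trace_adj_self: assumes "A \<in> carrier_mat d d"
  shows "mtrace (mat_adjoint A * A) = of_real (fro2 d A)"
proof -
  have dd: "dim_row A = d" "dim_col A = d" using assms by auto
  have "mtrace (mat_adjoint A * A) = hs d A A" by (rule trace_adj_mult[OF assms assms])
  also have "\<dots> = of_real (fro2 d A)" unfolding hs_def fro2_def
    by (simp add: cnj_mul)
  finally show ?thesis .
qed


lemma unitaryD: assumes "unitary_mat d V"
  shows "V \<in> carrier_mat d d" "V * mat_adjoint V = 1\<^sub>m d" "mat_adjoint V * V = 1\<^sub>m d"
  using assms unfolding unitary_mat_def by auto

lemma unitary_adj: assumes "unitary_mat d V" shows "unitary_mat d (mat_adjoint V)"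
  using assms unfolding unitary_mat_def adj_adj by (auto intro: adj_carrier)

lemma fro2_mult_unitary_right: assumes K: "K \<in> carrier_mat d d" and V: "unitary_mat d V"
  shows "fro2 d (K * V) = fro2 d K"
proof -
  note Vc = unitaryD[OF V]
  have KV: "K * V \<in> carrier_mat d d" using K Vc(1) by (rule mult_carrier_mat)
  have aK: "mat_adjoint K \<in> carrier_mat d d" using K by (rule adj_carrier)
  have aV: "mat_adjoint V \<in> carrier_mat d d" using Vc(1) by (rule adj_carrier)
  have "complex_of_real (fro2 d (K * V)) = mtrace ((K*V) * mat_adjoint (K*V))"
    using KV by (simp add: trace_mult_adj)
  also have "(K*V) * mat_adjoint (K*V) = (K*V) * (mat_adjoint V * mat_adjoint K)"
    using K Vc(1) by (simp add: adj_mult)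
  also have "\<dots> = K * (V * (mat_adjoint V * mat_adjoint K))"
    using K Vc(1) aV aK by (simp add: assoc_mult_mat[of _ d d _ d _ d])
  also have "V * (mat_adjoint V * mat_adjoint K) = (V * mat_adjoint V) * mat_adjoint K"
    using Vc(1) aV aK by (simp add: assoc_mult_mat[of _ d d _ d _ d])
  also have "\<dots> = mat_adjoint K" using Vc(2) by (simp add: left_mult_one_mat[OF aK])
  also have "mtrace (K * mat_adjoint K) = of_real (fro2 d K)" using K by (rule trace_mult_adj)
  finally show ?thesis by simp
qed

lemma fro2_mult_unitary_left: assumes K: "K \<in> carrier_mat d d" and V: "unitary_mat d V"
  shows "fro2 d (V * K) = fro2 d K"
proof -
  note Vc = unitaryD[OF V]
  have VK: "V * K \<in> carrier_mat d d" using Vc(1) K by (rule mult_carrier_mat)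
  have aK: "mat_adjoint K \<in> carrier_mat d d" using K by (rule adj_carrier)
  have aV: "mat_adjoint V \<in> carrier_mat d d" using Vc(1) by (rule adj_carrier)
  have "complex_of_real (fro2 d (V * K)) = mtrace (mat_adjoint (V*K) * (V*K))"
    using VK by (simp add: trace_adj_self)
  also have "mat_adjoint (V*K) * (V*K) = (mat_adjoint K * mat_adjoint V) * (V*K)"
    using K Vc(1) by (simp add: adj_mult)
  also have "\<dots> = mat_adjoint K * (mat_adjoint V * (V * K))"
    using K Vc(1) aV aK by (simp add: assoc_mult_mat[of _ d d _ d _ d])
  also have "mat_adjoint V * (V * K) = (mat_adjoint V * V) * K"
    using Vc(1) aV K by (simp add: assoc_mult_mat[of _ d d _ d _ d])
  also have "\<dots> = K" using Vc(3) by (simp add: left_mult_one_mat[OF K])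
  also have "mtrace (mat_adjoint K * K) = of_real (fro2 d K)" using K by (rule trace_adj_self)
  finally show ?thesis by simp
qed

lemma fro2_adj: assumes A: "A \<in> carrier_mat d d" shows "fro2 d (mat_adjoint A) = fro2 d A"
proof -
  have aA: "mat_adjoint A \<in> carrier_mat d d" using A by (rule adj_carrier)
  have "complex_of_real (fro2 d (mat_adjoint A)) = mtrace (mat_adjoint (mat_adjoint A) * mat_adjoint A)"
    using aA by (simp add: trace_adj_self)
  also have "\<dots> = of_real (fro2 d A)" unfolding adj_adj using A by (rule trace_mult_adj)
  finally show ?thesis by simp
qed

lemma fro2_unitary: assumes V: "unitary_mat d V" shows "fro2 d V = real d"
proof -
  note Vc = unitaryD[OF V]
  have "complex_of_real (fro2 d V) = mtrace (mat_adjoint V * V)"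
    using Vc(1) by (simp add: trace_adj_self)
  also have "\<dots> = mtrace (1\<^sub>m d)" using Vc(3) by simp
  also have "\<dots> = of_nat d" by (simp add: mtrace_def)
  also have "\<dots> = of_real (real d)" by simp
  finally show ?thesis by (simp only: of_real_eq_iff)
qed

lemma cmod_add_sq: "(cmod (a + b))^2 \<le> 2 * (cmod a)^2 + 2 * (cmod b)^2"
proof -
  have "cmod (a + b) \<le> cmod a + cmod b" by (rule norm_triangle_ineq)
  then have "(cmod (a + b))^2 \<le> (cmod a + cmod b)^2" by (simp add: power_mono)
  also have "\<dots> \<le> 2 * (cmod a)^2 + 2 * (cmod b)^2"
  proof -
    have e: "(cmod a + cmod b)^2 + (cmod a - cmod b)^2 = 2 * (cmod a)^2 + 2 * (cmod b)^2"
      by (simp add: power2_eq_square algebra_simps)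
    have "0 \<le> (cmod a - cmod b)^2" by simp
    with e show ?thesis by linarith
  qed
  finally show ?thesis .
qed

lemma fro2_add: assumes A: "A \<in> carrier_mat d d" and B: "B \<in> carrier_mat d d"
  shows "fro2 d (A + B) \<le> 2 * fro2 d A + 2 * fro2 d B"
proof -
  have dd: "dim_row A = d" "dim_col A = d" "dim_row B = d" "dim_col B = d" using A B by auto
  have "fro2 d (A + B) = (\<Sum>p\<in>SQ d. (cmod (A $$ p + B $$ p))^2)"
    unfolding fro2_def
  proof (rule sum.cong)
    fix p assume "p \<in> SQ d"
    then obtain i j where p: "p = (i,j)" "i < d" "j < d" by (auto simp: SQ_def)
    then show "(cmod ((A + B) $$ p))^2 = (cmod (A $$ p + B $$ p))^2" using dd by simp
  qed simp
  also have "\<dots> \<le> (\<Sum>p\<in>SQ d. 2 * (cmod (A $$ p))^2 + 2 * (cmod (B $$ p))^2)"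
    by (rule sum_mono) (rule cmod_add_sq)
  also have "\<dots> = 2 * fro2 d A + 2 * fro2 d B"
    unfolding fro2_def by (simp add: sum.distrib sum_distrib_left)
  finally show ?thesis .
qed




lemma digit_0': "digit dL r 0 = r mod dL" by (simp add: digit_def)

lemma digit_Suc': "digit dL r (Suc j) = digit dL (r div dL) j"
  by (simp add: digit_def div_mult2_eq)

lemma digit_lt: "0 < dL \<Longrightarrow> digit dL k j < dL" by (simp add: digit_def)

lemma sum_split_mult: assumes "0 < (dL::nat)"
  shows "(\<Sum>A<dL*m. F A) = (\<Sum>x<dL. \<Sum>A<m. F (x + dL*A))"
proof -
  let ?g = "\<lambda>(x,A). x + dL*A"
  have inj: "inj_on ?g ({..<dL} \<times> {..<m})"
  proof (rule inj_onI)
    fix p q assume hp: "p \<in> {..<dL} \<times> {..<m}" and hq: "q \<in> {..<dL} \<times> {..<m}"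
      and e0: "?g p = ?g q"
    obtain x A where p: "p = (x,A)" "x < dL" using hp by auto
    obtain x' A' where q: "q = (x',A')" "x' < dL" using hq by auto
    have e: "x + dL * A = x' + dL * A'" using e0 p q by simp
    have "(x + dL * A) mod dL = x" "(x' + dL * A') mod dL = x'" using p q by auto
    then have xx: "x = x'" using e by metis
    then have "dL * A = dL * A'" using e by simp
    then show "p = q" using xx assms p q by simp
  qed
  have img: "?g ` ({..<dL} \<times> {..<m}) = {..<dL*m}"
  proof (intro equalityI subsetI)
    fix y assume "y \<in> ?g ` ({..<dL} \<times> {..<m})"
    then obtain x A where "x < dL" "A < m" "y = x + dL*A" by auto
    moreover have "x + dL*A < dL * (A+1)" using \<open>x < dL\<close> by simp
    moreover have "dL * (A+1) \<le> dL * m" using \<open>A < m\<close> by (intro mult_le_mono2) simp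
    ultimately show "y \<in> {..<dL*m}" by simp
  next
    fix y assume y: "y \<in> {..<dL*m}"
    have "y = y mod dL + dL * (y div dL)" by simp
    moreover have "y mod dL < dL" using assms by simp
    moreover have "y div dL < m" using y assms by (simp add: less_mult_imp_div_less mult.commute)
    ultimately show "y \<in> ?g ` ({..<dL} \<times> {..<m})"
      by (intro image_eqI[of _ _ "(y mod dL, y div dL)"]) auto
  qed
  have "(\<Sum>A<dL*m. F A) = (\<Sum>p\<in>{..<dL} \<times> {..<m}. F (?g p))"
    using sum.reindex[OF inj, of F] img by simp
  also have "\<dots> = (\<Sum>x<dL. \<Sum>A<m. F (x + dL*A))"
    by (simp add: sum.cartesian_product split_def)
  finally show ?thesis .
qed




lemma digit_sum_prod: assumes "0 < dL"
  shows "(\<Sum>A<dL^n. \<Prod>j<n. f j (digit dL A j)) = (\<Prod>j<n. \<Sum>x<dL. (f j x :: 'a::comm_semiring_1))"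
proof (induction n arbitrary: f)
  case 0
  then show ?case by simp
next
  case (Suc n)
  have "(\<Sum>A<dL^Suc n. \<Prod>j<Suc n. f j (digit dL A j))
      = (\<Sum>x<dL. \<Sum>A<dL^n. \<Prod>j<Suc n. f j (digit dL (x + dL*A) j))"
    by (simp only: power_Suc sum_split_mult[OF assms])
  also have "\<dots> = (\<Sum>x<dL. \<Sum>A<dL^n. f 0 x * (\<Prod>j<n. f (Suc j) (digit dL A j)))"
  proof (rule sum.cong[OF refl], rule sum.cong[OF refl])
    fix x A assume x: "x \<in> {..<dL}"
    have a: "(x + dL*A) mod dL = x" "(x + dL*A) div dL = A" using x assms by auto
    show "(\<Prod>j<Suc n. f j (digit dL (x + dL*A) j)) = f 0 x * (\<Prod>j<n. f (Suc j) (digit dL A j))"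
      by (simp only: prod.lessThan_Suc_shift digit_0' digit_Suc' a)
  qed
  also have "\<dots> = (\<Sum>x<dL. f 0 x * (\<Prod>j<n. \<Sum>y<dL. f (Suc j) y))"
  proof -
    have IH': "(\<Sum>A<dL^n. \<Prod>j<n. f (Suc j) (digit dL A j)) = (\<Prod>j<n. \<Sum>x<dL. f (Suc j) x)"
      by (rule Suc.IH)
    show ?thesis by (simp only: sum_distrib_left[symmetric] IH')
  qed
  also have "\<dots> = (\<Sum>x<dL. f 0 x) * (\<Prod>j<n. \<Sum>y<dL. f (Suc j) y)"
    by (simp add: sum_distrib_right)
  also have "\<dots> = (\<Prod>j<Suc n. \<Sum>x<dL. f j x)"
    by (simp only: prod.lessThan_Suc_shift)
  finally show ?case .
qed

lemma digit_inj: assumes "0 < dL"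
  shows "r < dL^n \<Longrightarrow> r' < dL^n \<Longrightarrow> (\<forall>j<n. digit dL r j = digit dL r' j) \<Longrightarrow> r = r'"
proof (induction n arbitrary: r r')
  case 0
  then show ?case by simp
next
  case (Suc n)
  have m: "r mod dL = r' mod dL" using Suc.prems(3) digit_0'[of dL r] digit_0'[of dL r'] by auto
  have "r div dL < dL^n" "r' div dL < dL^n" using Suc.prems(1,2) assms
    by (simp_all add: less_mult_imp_div_less power_Suc mult.commute)
  moreover have "\<forall>j<n. digit dL (r div dL) j = digit dL (r' div dL) j"
    using Suc.prems(3) by (auto simp: digit_Suc'[symmetric])
  ultimately have "r div dL = r' div dL" by (rule Suc.IH)
  then show ?case using m by (metis div_mult_mod_eq)
qed

lemma prod_indicator: "(\<Prod>j<n. (if P j then (c::'a::comm_semiring_1) else 0)) = (if (\<forall>j<n. P j) then c^n else 0)"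
proof (cases "\<forall>j<n. P j")
  case True then show ?thesis by simp
next
  case False then obtain j where "j < n" "\<not> P j" by auto
  then have "(\<Prod>j<n. (if P j then c else 0)) = 0" by (intro prod_zero) auto
  then show ?thesis using False by (simp only: if_False)
qed

lemma shift_sum: assumes "0 < (m::nat)" shows "(\<Sum>x<m. f ((x + a) mod m)) = (\<Sum>y<m. f y)"
proof -
  let ?h = "\<lambda>x. (x + a) mod m"
  have inj: "inj_on ?h {..<m}"
  proof (rule inj_onI)
    fix x y assume h: "x \<in> {..<m}" "y \<in> {..<m}" "(x + a) mod m = (y + a) mod m"
    have key: "u = v" if uv: "u \<le> v" "u < m" "v < m" "(u + a) mod m = (v + a) mod m" for u v
    proof (rule ccontr)
      assume "u \<noteq> v"
      then have pos: "0 < v - u" using uv by simp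
      have "m dvd (v + a) - (u + a)" using mod_eq_dvd_iff_nat[of "u+a" "v+a" m] uv by simp
      then have "m dvd v - u" by simp
      moreover have "v - u < m" using uv by simp
      ultimately show False using pos nat_dvd_not_less by blast
    qed
    show "x = y"
    proof (cases "x \<le> y")
      case True then show ?thesis using key h by simp
    next
      case False then show ?thesis using key[of y x] h by simp
    qed
  qed
  have sub: "?h ` {..<m} \<subseteq> {..<m}" using assms by auto
  have "?h ` {..<m} = {..<m}" using endo_inj_surj[OF _ sub inj] by simp
  then have "bij_betw ?h {..<m} {..<m}" using inj by (simp add: bij_betw_def)
  then show ?thesis by (rule sum.reindex_bij_betw)
qed




lemma omega_norm[simp]: "cmod (omega dL) = 1" by (simp add: omega_def)
lemma tau_norm[simp]: "cmod (tau dL) = 1" by (simp add: tau_def)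

lemma unit_mul_cnj: "cmod z = 1 \<Longrightarrow> z * cnj z = 1"
  by (simp add: mul_cnj)

lemma unit_cnj_mul: "cmod z = 1 \<Longrightarrow> cnj z * z = 1"
  by (simp add: cnj_mul)

lemma S1: assumes "0 < dL" "r < dL" "r' < dL"
  shows "(\<Sum>x<dL. D1 dL a1 a2 r x * cnj (D1 dL a1 a2 r' x)) = (if r = r' then 1 else 0)"
proof -
  have "(\<Sum>x<dL. D1 dL a1 a2 r x * cnj (D1 dL a1 a2 r' x))
      = (\<Sum>x<dL. (\<lambda>y. if y = r \<and> r = r' then 1 else 0) ((x + a1) mod dL))"
  proof (rule sum.cong[OF refl])
    fix x
    let ?w = "tau dL ^ (a1*a2) * omega dL ^ (a2*x)"
    have w: "?w * cnj ?w = 1" by (rule unit_mul_cnj) (simp add: norm_mult norm_power)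
    show "D1 dL a1 a2 r x * cnj (D1 dL a1 a2 r' x) = (\<lambda>y. if y = r \<and> r = r' then 1 else 0) ((x + a1) mod dL)"
      unfolding D1_def using w by auto
  qed
  also have "\<dots> = (\<Sum>y<dL. if y = r \<and> r = r' then 1 else 0)" by (rule shift_sum) fact
  also have "\<dots> = (if r = r' then 1 else 0)" using assms by auto
  finally show ?thesis .
qed

lemma omega_pow_eq_1: assumes "0 < dL" shows "omega dL ^ k = 1 \<longleftrightarrow> dL dvd k"
proof -
  have "omega dL ^ k = exp (of_nat k * (\<i> * complex_of_real (2 * pi / real dL)))"
    unfolding omega_def cis_conv_exp by (simp only: exp_of_nat_mult)
  also have "of_nat k * (\<i> * complex_of_real (2 * pi / real dL)) = 2 * of_real pi * \<i> * of_nat k / of_nat dL"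
    by (simp add: field_simps)
  finally have "omega dL ^ k = exp (2 * of_real pi * \<i> * of_nat k / of_nat dL)" .
  then show ?thesis using complex_root_unity_eq_1[of dL k] assms by simp
qed

lemma omega_pow_dL: "0 < dL \<Longrightarrow> omega dL ^ dL = 1"
  using omega_pow_eq_1[of dL dL] by simp

lemma cnj_omega: assumes "0 < dL" shows "cnj (omega dL) = omega dL ^ (dL - 1)"
proof -
  have nz: "omega dL \<noteq> 0" using omega_norm[of dL] by (metis norm_zero zero_neq_one)
  have "omega dL * cnj (omega dL) = 1" by (rule unit_mul_cnj) simp
  moreover have "omega dL * omega dL ^ (dL - 1) = 1"
    using omega_pow_dL[OF assms] assms by (metis Suc_diff_1 power_Suc)
  ultimately show ?thesis using nz by (metis mult_left_cancel)
qed

lemma G_sum: assumes "0 < dL" "c < dL" "c' < dL"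
  shows "(\<Sum>a<dL. cnj (omega dL ^ (a*c)) * omega dL ^ (a*c')) = (if c = c' then of_nat dL else 0)"
proof -
  define k where "k = (dL - 1) * c + c'"
  define z where "z = omega dL ^ k"
  have trm: "cnj (omega dL ^ (a*c)) * omega dL ^ (a*c') = z ^ a" for a
  proof -
    have "cnj (omega dL ^ (a*c)) * omega dL ^ (a*c') = omega dL ^ ((dL - 1) * (a * c)) * omega dL ^ (a*c')"
      by (simp add: cnj_omega[OF assms(1)] power_mult)
    also have "\<dots> = omega dL ^ ((dL - 1) * (a * c) + a*c')" by (simp add: power_add)
    also have "(dL - 1) * (a * c) + a*c' = k * a" unfolding k_def by (simp add: algebra_simps)
    finally show ?thesis unfolding z_def by (simp add: power_mult)
  qed
  have kc: "k + c = dL * c + c'"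
  proof -
    have "(dL - 1) * c + c = dL * c" using assms(1) by (metis Suc_diff_1 mult_Suc add.commute)
    then show ?thesis unfolding k_def by simp
  qed
  have z1: "z = 1 \<longleftrightarrow> c = c'"
  proof
    assume "z = 1"
    then have "dL dvd k" unfolding z_def using omega_pow_eq_1[OF assms(1)] by simp
    then have "(k + c) mod dL = c mod dL" by (simp add: mod_add_left_eq[symmetric])
    then have "(dL * c + c') mod dL = c" using kc assms by simp
    then show "c = c'" using assms by simp
  next
    assume "c = c'"
    then have "k = dL * c" using kc by simp
    then show "z = 1" unfolding z_def using omega_pow_eq_1[OF assms(1)] by simp
  qed
  have zdL: "z ^ dL = 1" unfolding z_def
    by (simp add: power_mult[symmetric] mult.commute[of k dL] power_mult omega_pow_dL[OF assms(1)])
  have "(\<Sum>a<dL. cnj (omega dL ^ (a*c)) * omega dL ^ (a*c')) = (\<Sum>a<dL. z ^ a)"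
    by (rule sum.cong[OF refl], rule trm)
  also have "\<dots> = (if c = c' then of_nat dL else 0)"
    using z1 zdL by (simp add: sum_gp_strict)
  finally show ?thesis .
qed

lemma S3: assumes "0 < dL" "r < dL" "c < dL" "r' < dL" "c' < dL"
  shows "(\<Sum>a1<dL. \<Sum>a2<dL. cnj (D1 dL a1 a2 r c) * D1 dL a1 a2 r' c')
       = (if r = r' \<and> c = c' then of_nat dL else 0)"
proof -
  have inner: "(\<Sum>a2<dL. cnj (D1 dL a1 a2 r c) * D1 dL a1 a2 r' c')
     = (if r = (c + a1) mod dL \<and> r' = (c' + a1) mod dL then (if c = c' then of_nat dL else 0) else 0)" for a1
  proof -
    have "(\<Sum>a2<dL. cnj (D1 dL a1 a2 r c) * D1 dL a1 a2 r' c')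
       = (\<Sum>a2<dL. if r = (c + a1) mod dL \<and> r' = (c' + a1) mod dL then
              cnj (omega dL ^ (a2*c)) * omega dL ^ (a2*c') else 0)"
    proof (rule sum.cong[OF refl])
      fix a2
      have t: "cnj (tau dL ^ (a1*a2)) * tau dL ^ (a1*a2) = 1"
        by (rule unit_cnj_mul) (simp add: norm_power)
      have "cnj (tau dL ^ (a1 * a2) * omega dL ^ (a2 * c)) * (tau dL ^ (a1 * a2) * omega dL ^ (a2 * c'))
          = (cnj (tau dL ^ (a1*a2)) * tau dL ^ (a1*a2)) * (cnj (omega dL ^ (a2*c)) * omega dL ^ (a2*c'))"
        by (simp only: complex_cnj_mult mult_ac)
      also have "\<dots> = cnj (omega dL ^ (a2*c)) * omega dL ^ (a2*c')" using t by simp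
      finally have e: "cnj (tau dL ^ (a1 * a2) * omega dL ^ (a2 * c)) * (tau dL ^ (a1 * a2) * omega dL ^ (a2 * c'))
          = cnj (omega dL ^ (a2*c)) * omega dL ^ (a2*c')" .
      show "cnj (D1 dL a1 a2 r c) * D1 dL a1 a2 r' c' = (if r = (c + a1) mod dL \<and> r' = (c' + a1) mod dL then
              cnj (omega dL ^ (a2*c)) * omega dL ^ (a2*c') else 0)"
        unfolding D1_def using e by simp
    qed
    also have "\<dots> = (if r = (c + a1) mod dL \<and> r' = (c' + a1) mod dL then (if c = c' then of_nat dL else 0) else 0)"
    proof (cases "r = (c + a1) mod dL \<and> r' = (c' + a1) mod dL")
      case True then show ?thesis using G_sum[OF assms(1,3,5)] by simp
    next
      case False then show ?thesis by (simp only: if_False sum.neutral_const)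
    qed
    finally show ?thesis .
  qed
  show ?thesis
  proof (cases "c = c'")
    case False
    then show ?thesis by (simp add: inner)
  next
    case True
    have "(\<Sum>a1<dL. \<Sum>a2<dL. cnj (D1 dL a1 a2 r c) * D1 dL a1 a2 r' c')
        = (\<Sum>a1<dL. if r = (c + a1) mod dL \<and> r' = (c' + a1) mod dL then (if c = c' then of_nat dL else 0) else 0)"
      by (simp only: inner)
    also have "\<dots> = (\<Sum>a1<dL. (\<lambda>y. if y = r \<and> r = r' then of_nat dL else 0) ((a1 + c) mod dL))"
      using True by (intro sum.cong[OF refl]) (auto simp: add.commute)
    also have "\<dots> = (\<Sum>y<dL. if y = r \<and> r = r' then (of_nat dL :: complex) else 0)"
      by (rule shift_sum) fact
    also have "\<dots> = (if r = r' then of_nat dL else 0)" using assms by auto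
    finally show ?thesis using True by simp
  qed
qed




lemma Dop_carrier: "Dop dL n a b \<in> carrier_mat (dL^n) (dL^n)"
  unfolding Dop_def by simp

lemma Dop_index: "r < dL^n \<Longrightarrow> c < dL^n \<Longrightarrow>
  Dop dL n a b $$ (r,c) = (\<Prod>j<n. D1 dL (digit dL a j) (digit dL b j) (digit dL r j) (digit dL c j))"
  unfolding Dop_def by simp

lemma Dop_unitary: assumes "0 < dL" shows "unitary_mat (dL^n) (Dop dL n a b)"
proof -
  let ?d = "dL^n"
  let ?D = "Dop dL n a b"
  have Dc: "?D \<in> carrier_mat ?d ?d" by (rule Dop_carrier)
  have aD: "mat_adjoint ?D \<in> carrier_mat ?d ?d" using Dc by (rule adj_carrier)
  have dd: "dim_row ?D = ?d" "dim_col ?D = ?d" using Dc by auto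
  have one: "?D * mat_adjoint ?D = 1\<^sub>m ?d"
  proof (rule eq_matI)
    fix r r' assume "r < dim_row (1\<^sub>m ?d)" "r' < dim_col (1\<^sub>m ?d)"
    then have r: "r < ?d" and r': "r' < ?d" by auto
    have "(?D * mat_adjoint ?D) $$ (r, r') = (\<Sum>c<?d. ?D $$ (r,c) * mat_adjoint ?D $$ (c,r'))"
      using Dc aD r r' by (rule mult_index)
    also have "\<dots> = (\<Sum>c<?d. \<Prod>j<n. D1 dL (digit dL a j) (digit dL b j) (digit dL r j) (digit dL c j)
             * cnj (D1 dL (digit dL a j) (digit dL b j) (digit dL r' j) (digit dL c j)))"
    proof (rule sum.cong[OF refl])
      fix c assume "c \<in> {..<?d}"
      then have c: "c < ?d" by simp
      have "mat_adjoint ?D $$ (c,r') = cnj (?D $$ (r', c))" using c r' dd by simp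
      then show "?D $$ (r,c) * mat_adjoint ?D $$ (c,r') = (\<Prod>j<n. D1 dL (digit dL a j) (digit dL b j) (digit dL r j) (digit dL c j)
             * cnj (D1 dL (digit dL a j) (digit dL b j) (digit dL r' j) (digit dL c j)))"
        using c r r' by (simp add: Dop_index prod.distrib)
    qed
    also have "\<dots> = (\<Prod>j<n. \<Sum>x<dL. D1 dL (digit dL a j) (digit dL b j) (digit dL r j) x
             * cnj (D1 dL (digit dL a j) (digit dL b j) (digit dL r' j) x))"
      by (rule digit_sum_prod[OF assms])
    also have "\<dots> = (\<Prod>j<n. if digit dL r j = digit dL r' j then 1 else 0)"
      by (rule prod.cong[OF refl]) (simp add: S1 assms digit_lt)
    also have "\<dots> = (if r = r' then 1 else 0)"
      using digit_inj[OF assms r r'] by (auto simp: prod_indicator)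
    also have "\<dots> = 1\<^sub>m ?d $$ (r, r')" using r r' by simp
    finally show "(?D * mat_adjoint ?D) $$ (r, r') = 1\<^sub>m ?d $$ (r, r')" .
  qed (simp_all add: dd)
  moreover have "mat_adjoint ?D * ?D = 1\<^sub>m ?d"
    using mat_mult_left_right_inverse[OF Dc aD one] .
  ultimately show ?thesis unfolding unitary_mat_def using Dc by simp
qed

definition DD :: "nat \<Rightarrow> nat \<Rightarrow> nat \<times> nat \<Rightarrow> complex mat" where
  "DD dL n p = Dop dL n (fst p) (snd p)"

lemma completeness: assumes "0 < dL" and q: "q \<in> SQ (dL^n)" and q': "q' \<in> SQ (dL^n)"
  shows "(\<Sum>p\<in>SQ (dL^n). cnj (DD dL n p $$ q) * DD dL n p $$ q') = (if q = q' then of_nat (dL^n) else 0)"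
proof -
  obtain r c where rc: "q = (r,c)" "r < dL^n" "c < dL^n" using q by (auto simp: SQ_def)
  obtain r' c' where rc': "q' = (r',c')" "r' < dL^n" "c' < dL^n" using q' by (auto simp: SQ_def)
  define g where "g j x y = cnj (D1 dL x y (digit dL r j) (digit dL c j)) * D1 dL x y (digit dL r' j) (digit dL c' j)" for j x y
  have "(\<Sum>p\<in>SQ (dL^n). cnj (DD dL n p $$ q) * DD dL n p $$ q')
      = (\<Sum>a<dL^n. \<Sum>b<dL^n. \<Prod>j<n. g j (digit dL a j) (digit dL b j))"
    unfolding sum_SQ DD_def g_def using rc rc' by (simp add: Dop_index prod.distrib)
  also have "\<dots> = (\<Sum>a<dL^n. \<Prod>j<n. \<Sum>y<dL. g j (digit dL a j) y)"
    by (rule sum.cong[OF refl]) (rule digit_sum_prod[OF assms(1)])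
  also have "\<dots> = (\<Prod>j<n. \<Sum>x<dL. \<Sum>y<dL. g j x y)"
    by (rule digit_sum_prod[OF assms(1)])
  also have "\<dots> = (\<Prod>j<n. if digit dL r j = digit dL r' j \<and> digit dL c j = digit dL c' j then of_nat dL else 0)"
    unfolding g_def by (rule prod.cong[OF refl]) (simp add: S3 assms digit_lt)
  also have "\<dots> = (if q = q' then of_nat (dL^n) else 0)"
    using digit_inj[OF assms(1) rc(2) rc'(2)] digit_inj[OF assms(1) rc(3) rc'(3)] rc rc'
    by (auto simp: prod_indicator)
  finally show ?thesis .
qed

lemma parseval: assumes "0 < dL" and M: "M \<in> carrier_mat (dL^n) (dL^n)"
  shows "(\<Sum>p\<in>SQ (dL^n). (cmod (hs (dL^n) (DD dL n p) M))^2) = real (dL^n) * fro2 (dL^n) M"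
proof -
  let ?d = "dL^n"
  let ?S = "SQ ?d"
  let ?F = "\<lambda>p q q'. (M $$ q * cnj (M $$ q')) * (cnj (DD dL n p $$ q) * DD dL n p $$ q')"
  have "complex_of_real (\<Sum>p\<in>?S. (cmod (hs ?d (DD dL n p) M))^2)
      = (\<Sum>p\<in>?S. hs ?d (DD dL n p) M * cnj (hs ?d (DD dL n p) M))"
    unfolding of_real_sum by (rule sum.cong[OF refl]) (simp add: mul_cnj)
  also have "\<dots> = (\<Sum>p\<in>?S. \<Sum>q\<in>?S. \<Sum>q'\<in>?S. ?F p q q')"
  proof (rule sum.cong[OF refl])
    fix p
    have "hs ?d (DD dL n p) M * cnj (hs ?d (DD dL n p) M)
        = (\<Sum>q\<in>?S. cnj (DD dL n p $$ q) * M $$ q) * (\<Sum>q'\<in>?S. DD dL n p $$ q' * cnj (M $$ q'))"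
      unfolding hs_def cnj_sum complex_cnj_mult complex_cnj_cnj ..
    also have "\<dots> = (\<Sum>q\<in>?S. \<Sum>q'\<in>?S. (cnj (DD dL n p $$ q) * M $$ q) * (DD dL n p $$ q' * cnj (M $$ q')))"
      by (rule sum_product)
    also have "\<dots> = (\<Sum>q\<in>?S. \<Sum>q'\<in>?S. ?F p q q')"
      by (rule sum.cong[OF refl], rule sum.cong[OF refl]) (simp only: mult_ac)
    finally show "hs ?d (DD dL n p) M * cnj (hs ?d (DD dL n p) M) = (\<Sum>q\<in>?S. \<Sum>q'\<in>?S. ?F p q q')" .
  qed
  also have "\<dots> = (\<Sum>q\<in>?S. \<Sum>p\<in>?S. \<Sum>q'\<in>?S. ?F p q q')"
    by (rule sum.swap)
  also have "\<dots> = (\<Sum>q\<in>?S. \<Sum>q'\<in>?S. \<Sum>p\<in>?S. ?F p q q')"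
    by (rule sum.cong[OF refl], rule sum.swap)
  also have "\<dots> = (\<Sum>q\<in>?S. of_nat ?d * (M $$ q * cnj (M $$ q)))"
  proof (rule sum.cong[OF refl])
    fix q assume q: "q \<in> ?S"
    have "(\<Sum>q'\<in>?S. \<Sum>p\<in>?S. ?F p q q') = (\<Sum>q'\<in>?S. if q = q' then (M $$ q * cnj (M $$ q')) * of_nat ?d else 0)"
    proof (rule sum.cong[OF refl])
      fix q' assume q': "q' \<in> ?S"
      have "(\<Sum>p\<in>?S. ?F p q q') = (M $$ q * cnj (M $$ q')) * (\<Sum>p\<in>?S. cnj (DD dL n p $$ q) * DD dL n p $$ q')"
        by (simp only: sum_distrib_left)
      also have "\<dots> = (M $$ q * cnj (M $$ q')) * (if q = q' then of_nat ?d else 0)"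
        by (simp only: completeness[OF assms(1) q q'])
      finally show "(\<Sum>p\<in>?S. ?F p q q') = (if q = q' then (M $$ q * cnj (M $$ q')) * of_nat ?d else 0)"
        by simp
    qed
    also have "\<dots> = (M $$ q * cnj (M $$ q)) * of_nat ?d"
      using q by (simp add: sum.delta)
    finally show "(\<Sum>q'\<in>?S. \<Sum>p\<in>?S. ?F p q q') = of_nat ?d * (M $$ q * cnj (M $$ q))"
      by (simp only: mult.commute)
  qed
  also have "\<dots> = of_nat ?d * (\<Sum>q\<in>?S. complex_of_real ((cmod (M $$ q))^2))"
    by (simp only: sum_distrib_left mul_cnj of_real_power)
  also have "\<dots> = complex_of_real (real ?d * fro2 ?d M)"
    unfolding fro2_def by simp
  finally show ?thesis by (simp only: of_real_eq_iff)
qed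




lemma pow_smult_index: assumes A: "(A::complex mat) \<in> carrier_mat d d"
  shows "i < d \<Longrightarrow> j < d \<Longrightarrow> ((c \<cdot>\<^sub>m A) ^\<^sub>m k) $$ (i,j) = c^k * (A ^\<^sub>m k) $$ (i,j)"
proof (induction k arbitrary: i j)
  case 0
  have "dim_row (c \<cdot>\<^sub>m A) = d" "dim_row A = d" using A by auto
  then show ?case using 0 by simp
next
  case (Suc k)
  have cA: "c \<cdot>\<^sub>m A \<in> carrier_mat d d" using A by simp
  have dA: "dim_row A = d" "dim_col A = d" using A by auto
  have "((c \<cdot>\<^sub>m A) ^\<^sub>m Suc k) $$ (i,j) = ((c \<cdot>\<^sub>m A) ^\<^sub>m k * (c \<cdot>\<^sub>m A)) $$ (i,j)" by simp
  also have "\<dots> = (\<Sum>l<d. ((c \<cdot>\<^sub>m A) ^\<^sub>m k) $$ (i,l) * (c \<cdot>\<^sub>m A) $$ (l,j))"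
    by (rule mult_index[OF pow_carrier_mat[OF cA] cA Suc.prems])
  also have "\<dots> = (\<Sum>l<d. c^Suc k * ((A ^\<^sub>m k) $$ (i,l) * A $$ (l,j)))"
  proof (rule sum.cong[OF refl])
    fix l assume "l \<in> {..<d}"
    then have l: "l < d" by simp
    show "((c \<cdot>\<^sub>m A) ^\<^sub>m k) $$ (i,l) * (c \<cdot>\<^sub>m A) $$ (l,j) = c^Suc k * ((A ^\<^sub>m k) $$ (i,l) * A $$ (l,j))"
      using Suc.IH[OF Suc.prems(1) l] l Suc.prems dA by (simp add: mult_ac)
  qed
  also have "\<dots> = c^Suc k * (\<Sum>l<d. (A ^\<^sub>m k) $$ (i,l) * A $$ (l,j))"
    by (simp only: sum_distrib_left)
  also have "(\<Sum>l<d. (A ^\<^sub>m k) $$ (i,l) * A $$ (l,j)) = (A ^\<^sub>m k * A) $$ (i,j)"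
    by (rule mult_index[OF pow_carrier_mat[OF A] A Suc.prems, symmetric])
  finally show ?case by simp
qed

definition KB :: "nat \<Rightarrow> complex mat \<Rightarrow> real" where
  "KB d K = (\<Sum>p\<in>SQ d. cmod (K $$ p))"

lemma entry_le_KB: "l < d \<Longrightarrow> j < d \<Longrightarrow> cmod (K $$ (l,j)) \<le> KB d K"
  unfolding KB_def by (rule member_le_sum) (auto simp: SQ_def)

lemma KB_nonneg: "0 \<le> KB d K" unfolding KB_def by (simp add: sum_nonneg)

lemma pow_entry_bound: assumes A: "A \<in> carrier_mat d d"
  shows "i < d \<Longrightarrow> j < d \<Longrightarrow> cmod ((A ^\<^sub>m k) $$ (i,j)) \<le> (real d * KB d A + 1)^k"
proof (induction k arbitrary: i j)
  case 0
  have "dim_row A = d" using A by auto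
  then show ?case using 0 by simp
next
  case (Suc k)
  let ?C = "real d * KB d A + 1"
  have C0: "0 \<le> ?C" using KB_nonneg[of d A] by simp
  have "cmod ((A ^\<^sub>m Suc k) $$ (i,j)) = cmod (\<Sum>l<d. (A ^\<^sub>m k) $$ (i,l) * A $$ (l,j))"
    using mult_index[OF pow_carrier_mat[OF A] A Suc.prems] by simp
  also have "\<dots> \<le> (\<Sum>l<d. cmod ((A ^\<^sub>m k) $$ (i,l)) * cmod (A $$ (l,j)))"
    by (rule order_trans[OF norm_sum]) (simp add: norm_mult)
  also have "\<dots> \<le> (\<Sum>l<d. ?C^k * KB d A)"
  proof (rule sum_mono)
    fix l assume "l \<in> {..<d}"
    then have l: "l < d" by simp
    show "cmod ((A ^\<^sub>m k) $$ (i,l)) * cmod (A $$ (l,j)) \<le> ?C^k * KB d A"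
      using Suc.IH[OF Suc.prems(1) l] entry_le_KB[OF l Suc.prems(2), of A] C0
      by (intro mult_mono) auto
  qed
  also have "\<dots> = ?C^k * (real d * KB d A)" by simp
  also have "\<dots> \<le> ?C^k * ?C" using C0 by (intro mult_left_mono) auto
  finally show ?case by (simp add: mult.commute)
qed

lemma mat_exp_carrier: "A \<in> carrier_mat d d \<Longrightarrow> mat_exp A \<in> carrier_mat d d"
  unfolding mat_exp_def carrier_mat_def by simp

lemma exp_entry: assumes K: "K \<in> carrier_mat d d" and ij: "i < d" "j < d"
  shows "mat_exp (c \<cdot>\<^sub>m K) $$ (i,j) = (\<Sum>m. ((K ^\<^sub>m m) $$ (i,j) / of_nat (fact m)) * c^m)"
proof -
  have dK: "dim_row K = d" "dim_col K = d" using K by auto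
  have "mat_exp (c \<cdot>\<^sub>m K) $$ (i,j) = (\<Sum>m. ((c \<cdot>\<^sub>m K) ^\<^sub>m m) $$ (i,j) / of_nat (fact m))"
    unfolding mat_exp_def using dK ij by simp
  also have "\<dots> = (\<Sum>m. ((K ^\<^sub>m m) $$ (i,j) / of_nat (fact m)) * c^m)"
    by (rule arg_cong[where f=suminf], rule ext) (simp add: pow_smult_index[OF K ij] field_simps)
  finally show ?thesis .
qed

lemma exp_summable: assumes K: "K \<in> carrier_mat d d" and ij: "i < d" "j < d"
  shows "summable (\<lambda>m. ((K ^\<^sub>m m) $$ (i,j) / of_nat (fact m)) * (y::complex)^m)"
proof -
  let ?C = "real d * KB d K + 1"
  have "summable (\<lambda>m. inverse (fact m) * (?C * cmod y)^m)" by (rule summable_exp)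
  moreover have "norm (((K ^\<^sub>m m) $$ (i,j) / of_nat (fact m)) * y^m) \<le> inverse (fact m) * (?C * cmod y)^m" for m
  proof -
    have "norm (((K ^\<^sub>m m) $$ (i,j) / of_nat (fact m)) * y^m) = cmod ((K ^\<^sub>m m) $$ (i,j)) / fact m * cmod y ^ m"
      by (simp add: norm_mult norm_divide norm_power)
    also have "\<dots> \<le> ?C^m / fact m * cmod y ^ m"
      using pow_entry_bound[OF K ij, of m]
      by (intro mult_right_mono divide_right_mono) auto
    also have "\<dots> = inverse (fact m) * (?C * cmod y)^m"
      by (simp only: power_mult_distrib divide_inverse mult_ac)
    finally show ?thesis .
  qed
  ultimately show ?thesis
    by (rule summable_comparison_test'[where N=0])
qed

lemma exp_entry_deriv: assumes K: "K \<in> carrier_mat d d" and ij: "i < d" "j < d"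
  shows "((\<lambda>t::real. mat_exp (complex_of_real t \<cdot>\<^sub>m K) $$ (i,j)) has_vector_derivative K $$ (i,j)) (at 0)"
proof -
  define cf where "cf m = (K ^\<^sub>m m) $$ (i,j) / of_nat (fact m)" for m
  have eq: "(\<lambda>t::real. mat_exp (complex_of_real t \<cdot>\<^sub>m K) $$ (i,j)) = (\<lambda>t. (\<lambda>z. \<Sum>m. cf m * z^m) (complex_of_real t))"
    by (rule ext) (simp add: exp_entry[OF K ij] cf_def)
  have D: "((\<lambda>z. \<Sum>m. cf m * z^m) has_field_derivative (\<Sum>m. diffs cf m * 0^m)) (at 0)"
    by (rule termdiffs_strong_converges_everywhere) (unfold cf_def, rule exp_summable[OF K ij])
  have K1: "K ^\<^sub>m Suc 0 = K"
  proof -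
    have "dim_row K = d" using K by auto
    then show ?thesis using K by (simp add: left_mult_one_mat)
  qed
  have "(\<Sum>m. diffs cf m * 0^m) = diffs cf 0" by (rule powser_zero)
  also have "\<dots> = K $$ (i,j)" unfolding diffs_def cf_def K1 by simp
  finally have "(\<Sum>m. diffs cf m * 0^m) = K $$ (i,j)" .
  with D have D': "((\<lambda>z. \<Sum>m. cf m * z^m) has_field_derivative K $$ (i,j)) (at (complex_of_real 0))"
    by simp
  show ?thesis unfolding eq by (rule has_vector_derivative_real_field[OF D'])
qed

lemma exp_zero: assumes K: "K \<in> carrier_mat d d"
  shows "mat_exp (complex_of_real 0 \<cdot>\<^sub>m K) = 1\<^sub>m d"
proof (rule eq_matI)
  have dK: "dim_row K = d" "dim_col K = d" using K by auto
  fix i j assume "i < dim_row (1\<^sub>m d)" "j < dim_col (1\<^sub>m d)"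
  then have ij: "i < d" "j < d" by auto
  have "mat_exp (complex_of_real 0 \<cdot>\<^sub>m K) $$ (i,j) = (\<Sum>m. ((K ^\<^sub>m m) $$ (i,j) / of_nat (fact m)) * 0^m)"
    using exp_entry[OF K ij, of "complex_of_real 0"] by simp
  also have "\<dots> = (K ^\<^sub>m 0) $$ (i,j) / of_nat (fact 0)" by (rule powser_zero)
  also have "\<dots> = (1\<^sub>m d) $$ (i,j)" using ij dK by simp
  finally show "mat_exp (complex_of_real 0 \<cdot>\<^sub>m K) $$ (i,j) = (1\<^sub>m d) $$ (i,j)" .
next
  show "dim_row (mat_exp (complex_of_real 0 \<cdot>\<^sub>m K)) = dim_row (1\<^sub>m d)"
    using mat_exp_carrier[of "complex_of_real 0 \<cdot>\<^sub>m K" d] K by auto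
  show "dim_col (mat_exp (complex_of_real 0 \<cdot>\<^sub>m K)) = dim_col (1\<^sub>m d)"
    using mat_exp_carrier[of "complex_of_real 0 \<cdot>\<^sub>m K" d] K by auto
qed




lemma W_deriv: assumes K: "K \<in> carrier_mat d d" and U: "U \<in> carrier_mat d d" and ik: "i < d" "k < d"
  shows "((\<lambda>t::real. (mat_exp (complex_of_real t \<cdot>\<^sub>m K) * U) $$ (i,k)) has_vector_derivative (K * U) $$ (i,k)) (at 0)"
proof -
  have Ec: "mat_exp (c \<cdot>\<^sub>m K) \<in> carrier_mat d d" for c
    by (rule mat_exp_carrier) (use K in simp)
  have eq: "(\<lambda>t::real. (mat_exp (complex_of_real t \<cdot>\<^sub>m K) * U) $$ (i,k))
      = (\<lambda>t. \<Sum>m<d. mat_exp (complex_of_real t \<cdot>\<^sub>m K) $$ (i,m) * U $$ (m,k))"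
    by (rule ext) (rule mult_index[OF Ec U ik])
  have "((\<lambda>t. \<Sum>m<d. mat_exp (complex_of_real t \<cdot>\<^sub>m K) $$ (i,m) * U $$ (m,k)) has_vector_derivative
      (\<Sum>m<d. K $$ (i,m) * U $$ (m,k))) (at 0)"
    by (intro has_vector_derivative_sum has_vector_derivative_mult_left exp_entry_deriv[OF K]) (use ik in auto)
  moreover have "(K * U) $$ (i,k) = (\<Sum>m<d. K $$ (i,m) * U $$ (m,k))"
    by (rule mult_index[OF K U ik])
  ultimately show ?thesis unfolding eq by simp
qed

lemma ent3: assumes Y: "Y \<in> carrier_mat d d" and B: "B \<in> carrier_mat d d" and Z: "Z \<in> carrier_mat d d"
  and ji: "j < d" "i < d"
  shows "(Y * B * mat_adjoint Z) $$ (j,i) = (\<Sum>l<d. (\<Sum>k<d. Y $$ (j,k) * B $$ (k,l)) * cnj (Z $$ (i,l)))"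
proof -
  have YB: "Y * B \<in> carrier_mat d d" using Y B by (rule mult_carrier_mat)
  have aZ: "mat_adjoint Z \<in> carrier_mat d d" using Z by (rule adj_carrier)
  have dZ: "dim_row Z = d" "dim_col Z = d" using Z by auto
  have "(Y * B * mat_adjoint Z) $$ (j,i) = (\<Sum>l<d. (Y * B) $$ (j,l) * mat_adjoint Z $$ (l,i))"
    by (rule mult_index[OF YB aZ ji])
  also have "\<dots> = (\<Sum>l<d. (\<Sum>k<d. Y $$ (j,k) * B $$ (k,l)) * cnj (Z $$ (i,l)))"
  proof (rule sum.cong[OF refl])
    fix l assume "l \<in> {..<d}"
    then have l: "l < d" by simp
    show "(Y * B) $$ (j,l) * mat_adjoint Z $$ (l,i) = (\<Sum>k<d. Y $$ (j,k) * B $$ (k,l)) * cnj (Z $$ (i,l))"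
      using mult_index[OF Y B ji(1) l] l ji dZ by simp
  qed
  finally show ?thesis .
qed

lemma X_deriv: fixes W :: "real \<Rightarrow> complex mat"
  assumes Wc: "\<And>t. W t \<in> carrier_mat d d" and B: "B \<in> carrier_mat d d" and W': "W' \<in> carrier_mat d d"
   and wd: "\<And>i k. i < d \<Longrightarrow> k < d \<Longrightarrow> ((\<lambda>t. W t $$ (i,k)) has_vector_derivative W' $$ (i,k)) (at 0)"
   and ji: "j < d" "i < d"
  shows "((\<lambda>t. (W t * B * mat_adjoint (W t)) $$ (j,i)) has_vector_derivative
     (W' * B * mat_adjoint (W 0) + W 0 * B * mat_adjoint W') $$ (j,i)) (at 0)"
proof -
  have eq: "(\<lambda>t. (W t * B * mat_adjoint (W t)) $$ (j,i)) =
     (\<lambda>t. \<Sum>l<d. (\<Sum>k<d. W t $$ (j,k) * B $$ (k,l)) * cnj (W t $$ (i,l)))"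
    by (rule ext) (rule ent3[OF Wc B Wc ji])
  have D: "((\<lambda>t. \<Sum>l<d. (\<Sum>k<d. W t $$ (j,k) * B $$ (k,l)) * cnj (W t $$ (i,l))) has_vector_derivative
     (\<Sum>l<d. (\<Sum>k<d. W 0 $$ (j,k) * B $$ (k,l)) * cnj (W' $$ (i,l)) + (\<Sum>k<d. W' $$ (j,k) * B $$ (k,l)) * cnj (W 0 $$ (i,l)))) (at 0)"
    by (intro has_vector_derivative_sum has_vector_derivative_mult has_vector_derivative_mult_left
        has_vector_derivative_cnj wd) (use ji in auto)
  have c1: "W' * B * mat_adjoint (W 0) \<in> carrier_mat d d"
    using W' B Wc[of 0] by (intro mult_carrier_mat adj_carrier)
  have c2: "W 0 * B * mat_adjoint W' \<in> carrier_mat d d"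
    using W' B Wc[of 0] by (intro mult_carrier_mat adj_carrier)
  have d2: "dim_row (W 0 * B * mat_adjoint W') = d" "dim_col (W 0 * B * mat_adjoint W') = d" using c2 by auto
  have "(W' * B * mat_adjoint (W 0) + W 0 * B * mat_adjoint W') $$ (j,i)
      = (W' * B * mat_adjoint (W 0)) $$ (j,i) + (W 0 * B * mat_adjoint W') $$ (j,i)"
    using ji d2 by simp
  also have "\<dots> = (\<Sum>l<d. (\<Sum>k<d. W' $$ (j,k) * B $$ (k,l)) * cnj (W 0 $$ (i,l)))
                 + (\<Sum>l<d. (\<Sum>k<d. W 0 $$ (j,k) * B $$ (k,l)) * cnj (W' $$ (i,l)))"
    by (simp only: ent3[OF W' B Wc ji] ent3[OF Wc B W' ji])
  also have "\<dots> = (\<Sum>l<d. (\<Sum>k<d. W 0 $$ (j,k) * B $$ (k,l)) * cnj (W' $$ (i,l)) + (\<Sum>k<d. W' $$ (j,k) * B $$ (k,l)) * cnj (W 0 $$ (i,l)))"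
    by (simp only: sum.distrib add.commute)
  finally show ?thesis unfolding eq using D by simp
qed

lemma trace_form: assumes A: "A \<in> carrier_mat d d" and W: "W \<in> carrier_mat d d" and B: "B \<in> carrier_mat d d"
  shows "mtrace (mat_adjoint A * W * B * mat_adjoint W) = hs d A (W * B * mat_adjoint W)"
proof -
  have aA: "mat_adjoint A \<in> carrier_mat d d" using A by (rule adj_carrier)
  have aW: "mat_adjoint W \<in> carrier_mat d d" using W by (rule adj_carrier)
  have WB: "W * B \<in> carrier_mat d d" using W B by (rule mult_carrier_mat)
  have "mat_adjoint A * W * B = mat_adjoint A * (W * B)"
    by (rule assoc_mult_mat[OF aA W B])
  then have "mat_adjoint A * W * B * mat_adjoint W = mat_adjoint A * (W * B) * mat_adjoint W" by simp
  also have "\<dots> = mat_adjoint A * (W * B * mat_adjoint W)"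
    by (rule assoc_mult_mat[OF aA WB aW])
  finally have e: "mat_adjoint A * W * B * mat_adjoint W = mat_adjoint A * (W * B * mat_adjoint W)" .
  have X: "W * B * mat_adjoint W \<in> carrier_mat d d" using WB aW by (rule mult_carrier_mat)
  show ?thesis unfolding e by (rule trace_adj_mult[OF A X])
qed

lemma T_deriv: fixes W :: "real \<Rightarrow> complex mat"
  assumes Wc: "\<And>t. W t \<in> carrier_mat d d" and B: "B \<in> carrier_mat d d" and W': "W' \<in> carrier_mat d d"
   and wd: "\<And>i k. i < d \<Longrightarrow> k < d \<Longrightarrow> ((\<lambda>t. W t $$ (i,k)) has_vector_derivative W' $$ (i,k)) (at 0)"
   and A: "A \<in> carrier_mat d d"
  shows "((\<lambda>t. mtrace (mat_adjoint A * W t * B * mat_adjoint (W t))) has_vector_derivative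
     hs d A (W' * B * mat_adjoint (W 0) + W 0 * B * mat_adjoint W')) (at 0)"
proof -
  have eq: "(\<lambda>t. mtrace (mat_adjoint A * W t * B * mat_adjoint (W t))) =
      (\<lambda>t. \<Sum>q\<in>SQ d. cnj (A $$ q) * (W t * B * mat_adjoint (W t)) $$ q)"
    by (rule ext) (simp only: trace_form[OF A Wc B] hs_def)
  have "((\<lambda>t. \<Sum>q\<in>SQ d. cnj (A $$ q) * (W t * B * mat_adjoint (W t)) $$ q) has_vector_derivative
     (\<Sum>q\<in>SQ d. cnj (A $$ q) * (W' * B * mat_adjoint (W 0) + W 0 * B * mat_adjoint W') $$ q)) (at 0)"
  proof (rule has_vector_derivative_sum)
    fix q assume "q \<in> SQ d"
    then obtain j i where q: "q = (j,i)" "j < d" "i < d" by (auto simp: SQ_def)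
    show "((\<lambda>t. cnj (A $$ q) * (W t * B * mat_adjoint (W t)) $$ q) has_vector_derivative
       cnj (A $$ q) * (W' * B * mat_adjoint (W 0) + W 0 * B * mat_adjoint W') $$ q) (at 0)"
      unfolding q(1) by (intro has_vector_derivative_mult_right X_deriv[OF Wc B W' wd q(2,3)])
  qed
  then show ?thesis unfolding eq hs_def .
qed

lemma G_deriv: fixes T :: "'a \<Rightarrow> 'b \<Rightarrow> real \<Rightarrow> complex"
  assumes "\<And>a b. a \<in> S \<Longrightarrow> b \<in> S' \<Longrightarrow> (T a b has_vector_derivative T' a b) (at 0)"
  shows "((\<lambda>t. \<Sum>a\<in>S. \<Sum>b\<in>S'. (T a b t * cnj (T a b t)) * (T a b t * cnj (T a b t))) has_vector_derivative
   (\<Sum>a\<in>S. \<Sum>b\<in>S'. (T a b 0 * cnj (T a b 0)) * (T a b 0 * cnj (T' a b) + T' a b * cnj (T a b 0))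
      + (T a b 0 * cnj (T' a b) + T' a b * cnj (T a b 0)) * (T a b 0 * cnj (T a b 0)))) (at 0)"
  by (intro has_vector_derivative_sum has_vector_derivative_mult has_vector_derivative_cnj assms)




lemma re4: "Re ((z * cnj z) * (z * cnj z)) = (cmod z)^4"
proof -
  have "Re ((z * cnj z) * (z * cnj z)) = Re (complex_of_real ((cmod z)^2 * (cmod z)^2))"
    by (simp only: complex_norm_square of_real_mult)
  also have "\<dots> = (cmod z)^2 * (cmod z)^2" by (rule Re_complex_of_real)
  also have "\<dots> = (cmod z)^4" by (simp add: power_add[symmetric])
  finally show ?thesis .
qed

lemma H2_form: "H2 dL n W = 1 - 1 / real (dL ^ n) ^ 6 *
   Re (\<Sum>a\<in>SQ (dL^n). \<Sum>b\<in>SQ (dL^n).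
     (mtrace (mat_adjoint (DD dL n a) * W * DD dL n b * mat_adjoint W) * cnj (mtrace (mat_adjoint (DD dL n a) * W * DD dL n b * mat_adjoint W)))
   * (mtrace (mat_adjoint (DD dL n a) * W * DD dL n b * mat_adjoint W) * cnj (mtrace (mat_adjoint (DD dL n a) * W * DD dL n b * mat_adjoint W))))"
  unfolding H2_def Re_sum re4 by (simp add: sum_SQ DD_def)

lemma fro2_one: assumes K: "K \<in> carrier_mat d d" and f: "frob_norm K = 1" shows "fro2 d K = 1"
proof -
  have "sqrt (fro2 d K) = 1" using f unfolding frob_norm_def trace_adj_self[OF K] by simp
  then show ?thesis by simp
qed

lemma final_bound: fixes x y :: "'a \<Rightarrow> 'b \<Rightarrow> real" and d :: real
  assumes d: "d \<ge> 1" and fA: "finite A" and fB: "finite B"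
    and x0: "\<And>a b. 0 \<le> x a b" and y0: "\<And>a b. 0 \<le> y a b"
    and xs: "\<And>b. b \<in> B \<Longrightarrow> (\<Sum>a\<in>A. (x a b)^2) = d^2"
    and ys: "\<And>b. b \<in> B \<Longrightarrow> (\<Sum>a\<in>A. (y a b)^2) \<le> 4 * d"
    and cB: "real (card B) = d^2"
  shows "(\<Sum>a\<in>A. \<Sum>b\<in>B. 4 * (x a b)^3 * y a b) \<le> 8 * d^6 / sqrt d"
proof -
  define s where "s = sqrt d"
  have s0: "0 < s" using d unfolding s_def by simp
  have sd: "s^2 = d" using d unfolding s_def by simp
  have xy: "u * v \<le> u^2 / s + s * v^2 / 4" if "0 \<le> u" "0 \<le> v" for u v
  proof -
    have "0 \<le> (u - s * v/2)^2" by simp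
    moreover have "(u - s * v/2)^2 = u^2 - s * (u * v) + s^2 * v^2/4" by (simp add: power2_eq_square algebra_simps)
    ultimately have "s * (u * v) \<le> u^2 + s^2 * v^2/4" by linarith
    then have "u * v \<le> (u^2 + s^2 * v^2/4) / s" using s0 by (simp add: pos_le_divide_eq mult.commute)
    also have "\<dots> = u^2 / s + s * v^2 / 4" using s0 by (simp add: field_simps power2_eq_square)
    finally show ?thesis .
  qed
  have xle: "x a b \<le> d" if b: "b \<in> B" and a: "a \<in> A" for a b
  proof -
    have "(x a b)^2 \<le> (\<Sum>a\<in>A. (x a b)^2)" by (rule member_le_sum) (use a fA in auto)
    then have "(x a b)^2 \<le> d^2" using xs[OF b] by simp
    then show ?thesis using d x0[of a b] by (simp add: abs_le_square_iff[symmetric] power2_le_iff_abs_le)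
  qed
  have perb: "(\<Sum>a\<in>A. 4 * (x a b)^3 * y a b) \<le> 4 * d^2 * (d^2 / s + s * d)" if b: "b \<in> B" for b
  proof -
    have "(\<Sum>a\<in>A. 4 * (x a b)^3 * y a b) \<le> (\<Sum>a\<in>A. 4 * d^2 * ((x a b)^2 / s + s * (y a b)^2 / 4))"
    proof (rule sum_mono)
      fix a assume a: "a \<in> A"
      have "(x a b)^2 \<le> d^2" using xle[OF b a] x0[of a b] by (simp add: power_mono)
      then have "4 * (x a b)^3 * y a b = 4 * (x a b)^2 * (x a b * y a b)" by (simp add: power3_eq_cube power2_eq_square)
      also have "\<dots> \<le> 4 * d^2 * (x a b * y a b)"
        using \<open>(x a b)^2 \<le> d^2\<close> x0[of a b] y0[of a b] by (intro mult_right_mono) auto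
      also have "\<dots> \<le> 4 * d^2 * ((x a b)^2 / s + s * (y a b)^2 / 4)"
        using xy[OF x0 y0] by (intro mult_left_mono) auto
      finally show "4 * (x a b)^3 * y a b \<le> 4 * d^2 * ((x a b)^2 / s + s * (y a b)^2 / 4)" .
    qed
    also have "\<dots> = 4 * d^2 * (\<Sum>a\<in>A. (x a b)^2 / s + s * (y a b)^2 / 4)"
      by (simp only: sum_distrib_left)
    also have "\<dots> = 4 * d^2 * ((\<Sum>a\<in>A. (x a b)^2) / s + s * (\<Sum>a\<in>A. (y a b)^2) / 4)"
      by (simp only: sum.distrib sum_divide_distrib[symmetric] sum_distrib_left[symmetric])
    also have "\<dots> \<le> 4 * d^2 * (d^2 / s + s * (4 * d) / 4)"
      using xs[OF b] ys[OF b] s0 d by (intro mult_left_mono add_mono) (auto intro: divide_right_mono mult_left_mono)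
    also have "\<dots> = 4 * d^2 * (d^2 / s + s * d)" by simp
    finally show ?thesis .
  qed
  have "(\<Sum>a\<in>A. \<Sum>b\<in>B. 4 * (x a b)^3 * y a b) = (\<Sum>b\<in>B. \<Sum>a\<in>A. 4 * (x a b)^3 * y a b)"
    by (rule sum.swap)
  also have "\<dots> \<le> (\<Sum>b\<in>B. 4 * d^2 * (d^2 / s + s * d))"
    by (rule sum_mono) (rule perb)
  also have "\<dots> = d^2 * (4 * d^2 * (d^2 / s + s * d))" using cB by simp
  also have "\<dots> = 8 * d^6 / s"
  proof -
    have ss: "s * s = d" using sd by (simp add: power2_eq_square)
    have h1: "(d^2/s + s * d) * s = d^2 + (s * s)*d" using s0 by (simp add: field_simps)
    then have "(d^2/s + s * d) * s = 2 * d^2" unfolding ss by (simp add: power2_eq_square)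
    then have X: "d^2/s + s * d = 2*d^2/s" using s0 by (simp add: eq_divide_eq)
    show ?thesis unfolding X by (simp add: field_simps eval_nat_numeral mult_ac)
  qed
  finally show ?thesis unfolding s_def .
qed




lemma fro2_V: assumes U: "unitary_mat d U" and B: "unitary_mat d B"
  shows "fro2 d (U * B * mat_adjoint U) = real d"
proof -
  note Uc = unitaryD[OF U]
  have Bc: "B \<in> carrier_mat d d" using unitaryD[OF B] by simp
  have UB: "U * B \<in> carrier_mat d d" using Uc(1) Bc by (rule mult_carrier_mat)
  have "fro2 d (U * B * mat_adjoint U) = fro2 d (U * B)" by (rule fro2_mult_unitary_right[OF UB unitary_adj[OF U]])
  also have "\<dots> = fro2 d B" by (rule fro2_mult_unitary_left[OF Bc U])
  also have "\<dots> = real d" by (rule fro2_unitary[OF B])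
  finally show ?thesis .
qed

lemma fro2_Mb: assumes U: "unitary_mat d U" and B: "unitary_mat d B" and K: "K \<in> carrier_mat d d"
  and f: "fro2 d K = 1"
  shows "fro2 d (K * U * B * mat_adjoint U + U * B * mat_adjoint (K * U)) \<le> 4"
proof -
  note Uc = unitaryD[OF U]
  have Bc: "B \<in> carrier_mat d d" using unitaryD[OF B] by simp
  have aU: "mat_adjoint U \<in> carrier_mat d d" using Uc(1) by (rule adj_carrier)
  have aK: "mat_adjoint K \<in> carrier_mat d d" using K by (rule adj_carrier)
  have KU: "K * U \<in> carrier_mat d d" using K Uc(1) by (rule mult_carrier_mat)
  have KUB: "K * U * B \<in> carrier_mat d d" using KU Bc by (rule mult_carrier_mat)
  have UB: "U * B \<in> carrier_mat d d" using Uc(1) Bc by (rule mult_carrier_mat)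
  have aUaK: "mat_adjoint U * mat_adjoint K \<in> carrier_mat d d" using aU aK by (rule mult_carrier_mat)
  have BaUaK: "B * (mat_adjoint U * mat_adjoint K) \<in> carrier_mat d d" using Bc aUaK by (rule mult_carrier_mat)
  have c1: "K * U * B * mat_adjoint U \<in> carrier_mat d d" using KUB aU by (rule mult_carrier_mat)
  have e2: "U * B * mat_adjoint (K * U) = U * (B * (mat_adjoint U * mat_adjoint K))"
    unfolding adj_mult[OF K Uc(1)] by (rule assoc_mult_mat[OF Uc(1) Bc aUaK])
  have c2: "U * B * mat_adjoint (K * U) \<in> carrier_mat d d"
    unfolding e2 using Uc(1) BaUaK by (rule mult_carrier_mat)
  have f1: "fro2 d (K * U * B * mat_adjoint U) = 1"
  proof -
    have "fro2 d (K * U * B * mat_adjoint U) = fro2 d (K * U * B)"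
      by (rule fro2_mult_unitary_right[OF KUB unitary_adj[OF U]])
    also have "\<dots> = fro2 d (K * U)" by (rule fro2_mult_unitary_right[OF KU B])
    also have "\<dots> = fro2 d K" by (rule fro2_mult_unitary_right[OF K U])
    finally show ?thesis using f by simp
  qed
  have f2: "fro2 d (U * B * mat_adjoint (K * U)) = 1"
  proof -
    have "fro2 d (U * B * mat_adjoint (K * U)) = fro2 d (B * (mat_adjoint U * mat_adjoint K))"
      unfolding e2 by (rule fro2_mult_unitary_left[OF BaUaK U])
    also have "\<dots> = fro2 d (mat_adjoint U * mat_adjoint K)" by (rule fro2_mult_unitary_left[OF aUaK B])
    also have "\<dots> = fro2 d (mat_adjoint K)" by (rule fro2_mult_unitary_left[OF aK unitary_adj[OF U]])
    also have "\<dots> = fro2 d K" by (rule fro2_adj[OF K])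
    finally show ?thesis using f by simp
  qed
  show ?thesis using fro2_add[OF c1 c2] f1 f2 by simp
qed

lemma term_bound: "cmod ((z * cnj z) * (z * cnj w + w * cnj z) + (z * cnj w + w * cnj z) * (z * cnj z))
    \<le> 4 * (cmod z)^3 * cmod w"
proof -
  let ?F = "z * cnj w + w * cnj z"
  have a: "cmod (z * cnj z) = (cmod z)^2" by (simp add: norm_mult power2_eq_square)
  have b: "cmod ?F \<le> 2 * (cmod z * cmod w)"
    by (rule order_trans[OF norm_triangle_ineq]) (simp add: norm_mult)
  have "cmod ((z * cnj z) * ?F + ?F * (z * cnj z)) \<le> cmod ((z * cnj z) * ?F) + cmod (?F * (z * cnj z))"
    by (rule norm_triangle_ineq)
  also have "\<dots> = 2 * ((cmod z)^2 * cmod ?F)"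
  proof -
    have e1: "cmod ((z * cnj z) * ?F) = cmod (z * cnj z) * cmod ?F" by (rule norm_mult)
    have e2: "cmod (?F * (z * cnj z)) = cmod ?F * cmod (z * cnj z)" by (rule norm_mult)
    show ?thesis unfolding e1 e2 a by simp
  qed
  also have "\<dots> \<le> 2 * ((cmod z)^2 * (2 * (cmod z * cmod w)))"
    using b by (intro mult_left_mono) auto
  also have "\<dots> = 4 * (cmod z)^3 * cmod w" by (simp add: power2_eq_square power3_eq_cube)
  finally show ?thesis .
qed



theorem theorem9:
  fixes dL n :: nat and U K :: "complex mat"
  assumes "dL \<ge> 2"
    and "unitary_mat (dL ^ n) U"
    and "K \<in> carrier_mat (dL ^ n) (dL ^ n)"
    and "mat_adjoint K = - K"
    and "frob_norm K = 1"
  shows "\<exists>D. ((\<lambda>t::real. H2 dL n (mat_exp (complex_of_real t \<cdot>\<^sub>m K) * U))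
              has_real_derivative D) (at 0)
           \<and> \<bar>D\<bar> \<le> 8 / sqrt (real (dL ^ n))"
proof -
  define d where "d = dL ^ n"
  have dL0: "0 < dL" using assms(1) by simp
  have d1: "1 \<le> d" unfolding d_def using dL0 by simp
  have Uu: "unitary_mat d U" using assms(2) unfolding d_def .
  have Uc: "U \<in> carrier_mat d d" using unitaryD[OF Uu] by simp
  have Kc: "K \<in> carrier_mat d d" using assms(3) unfolding d_def .
  have fK: "fro2 d K = 1" by (rule fro2_one[OF Kc assms(5)])
  define W where "W t = mat_exp (complex_of_real t \<cdot>\<^sub>m K) * U" for t :: real
  have Ec: "mat_exp (complex_of_real t \<cdot>\<^sub>m K) \<in> carrier_mat d d" for t
    by (rule mat_exp_carrier) (use Kc in simp)
  have Wc: "W t \<in> carrier_mat d d" for t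
    unfolding W_def using Ec Uc by (rule mult_carrier_mat)
  have W0: "W 0 = U"
    unfolding W_def exp_zero[OF Kc] by (rule left_mult_one_mat[OF Uc])
  have KUc: "K * U \<in> carrier_mat d d" using Kc Uc by (rule mult_carrier_mat)
  have wd: "((\<lambda>t. W t $$ (i,k)) has_vector_derivative (K * U) $$ (i,k)) (at 0)" if "i < d" "k < d" for i k
    unfolding W_def by (rule W_deriv[OF Kc Uc that])
  have DDc: "DD dL n p \<in> carrier_mat d d" for p
    unfolding DD_def d_def by (rule Dop_carrier)
  have DDu: "unitary_mat d (DD dL n p)" for p
    unfolding DD_def d_def by (rule Dop_unitary[OF dL0])
  define T where "T a b t = mtrace (mat_adjoint (DD dL n a) * W t * DD dL n b * mat_adjoint (W t))" for a b t
  define Mb where "Mb b = K * U * DD dL n b * mat_adjoint U + U * DD dL n b * mat_adjoint (K * U)" for b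
  define T' where "T' a b = hs d (DD dL n a) (Mb b)" for a b
  have Td: "(T a b has_vector_derivative T' a b) (at 0)" for a b
  proof -
    have "((\<lambda>t. mtrace (mat_adjoint (DD dL n a) * W t * DD dL n b * mat_adjoint (W t))) has_vector_derivative
       hs d (DD dL n a) (K * U * DD dL n b * mat_adjoint (W 0) + W 0 * DD dL n b * mat_adjoint (K * U))) (at 0)"
      by (rule T_deriv[OF Wc DDc KUc wd DDc])
    then show ?thesis unfolding T'_def Mb_def W0 T_def[abs_def] by simp
  qed
  have T0: "T a b 0 = hs d (DD dL n a) (U * DD dL n b * mat_adjoint U)" for a b
    unfolding T_def W0 by (rule trace_form[OF DDc Uc DDc])
  define S where "S = SQ d"
  define G where "G t = (\<Sum>a\<in>S. \<Sum>b\<in>S. (T a b t * cnj (T a b t)) * (T a b t * cnj (T a b t)))" for t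
  define G' where "G' = (\<Sum>a\<in>S. \<Sum>b\<in>S. (T a b 0 * cnj (T a b 0)) * (T a b 0 * cnj (T' a b) + T' a b * cnj (T a b 0))
      + (T a b 0 * cnj (T' a b) + T' a b * cnj (T a b 0)) * (T a b 0 * cnj (T a b 0)))"
  have Gd: "(G has_vector_derivative G') (at 0)"
  proof -
    have "((\<lambda>t. \<Sum>a\<in>S. \<Sum>b\<in>S. (T a b t * cnj (T a b t)) * (T a b t * cnj (T a b t))) has_vector_derivative G') (at 0)"
      unfolding G'_def by (rule G_deriv) (rule Td)
    then show ?thesis unfolding G_def[abs_def] .
  qed
  have ReGd: "((\<lambda>t. Re (G t)) has_real_derivative Re G') (at 0)"
    using bounded_linear.has_vector_derivative[OF bounded_linear_Re Gd]
    by (simp add: has_real_derivative_iff_has_vector_derivative)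
  define c where "c = 1 / real d ^ 6"
  have Hd: "((\<lambda>t. 1 - c * Re (G t)) has_real_derivative (0 - c * Re G')) (at 0)"
    by (intro DERIV_diff DERIV_const DERIV_cmult ReGd)
  have Heq: "(\<lambda>t::real. H2 dL n (mat_exp (complex_of_real t \<cdot>\<^sub>m K) * U)) = (\<lambda>t. 1 - c * Re (G t))"
  proof (rule ext)
    fix t :: real
    show "H2 dL n (mat_exp (complex_of_real t \<cdot>\<^sub>m K) * U) = 1 - c * Re (G t)"
      unfolding H2_form[of dL n] G_def T_def W_def c_def S_def d_def ..
  qed
  define x where "x a b = cmod (T a b 0)" for a b
  define y where "y a b = cmod (T' a b)" for a b
  have cardS: "real (card S) = (real d)^2" unfolding S_def SQ_def by (simp add: card_cartesian_product power2_eq_square)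
  have xs: "(\<Sum>a\<in>S. (x a b)^2) = (real d)^2" for b
  proof -
    have Vc: "U * DD dL n b * mat_adjoint U \<in> carrier_mat d d"
      using Uc DDc adj_carrier[OF Uc] by (intro mult_carrier_mat)
    have "(\<Sum>a\<in>S. (x a b)^2) = (\<Sum>a\<in>SQ (dL^n). (cmod (hs (dL^n) (DD dL n a) (U * DD dL n b * mat_adjoint U)))^2)"
      unfolding x_def T0 S_def d_def ..
    also have "\<dots> = real (dL^n) * fro2 (dL^n) (U * DD dL n b * mat_adjoint U)"
      by (rule parseval[OF dL0]) (use Vc in \<open>simp add: d_def\<close>)
    also have "\<dots> = real d * real d" unfolding d_def[symmetric] fro2_V[OF Uu DDu] ..
    finally show ?thesis by (simp add: power2_eq_square)
  qed
  have ys: "(\<Sum>a\<in>S. (y a b)^2) \<le> 4 * real d" for b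
  proof -
    have Mc: "Mb b \<in> carrier_mat d d"
      unfolding Mb_def using Kc Uc DDc adj_carrier[OF Uc] adj_carrier[OF KUc]
      by (intro add_carrier_mat mult_carrier_mat)
    have "(\<Sum>a\<in>S. (y a b)^2) = (\<Sum>a\<in>SQ (dL^n). (cmod (hs (dL^n) (DD dL n a) (Mb b)))^2)"
      unfolding y_def T'_def S_def d_def ..
    also have "\<dots> = real (dL^n) * fro2 (dL^n) (Mb b)"
      by (rule parseval[OF dL0]) (use Mc in \<open>simp add: d_def\<close>)
    also have "\<dots> = real d * fro2 d (Mb b)" unfolding d_def ..
    also have "\<dots> \<le> real d * 4"
      unfolding Mb_def by (rule mult_left_mono[OF fro2_Mb[OF Uu DDu Kc fK]]) simp
    finally show ?thesis by simp
  qed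
  have fS: "finite S" unfolding S_def by simp
  have bnd: "(\<Sum>a\<in>S. \<Sum>b\<in>S. 4 * (x a b)^3 * y a b) \<le> 8 * (real d)^6 / sqrt (real d)"
    by (rule final_bound[OF _ fS fS _ _ xs ys cardS]) (use d1 in \<open>auto simp: x_def y_def\<close>)
  have G'le: "cmod G' \<le> (\<Sum>a\<in>S. \<Sum>b\<in>S. 4 * (x a b)^3 * y a b)"
  proof -
    have "cmod G' \<le> (\<Sum>a\<in>S. cmod (\<Sum>b\<in>S. (T a b 0 * cnj (T a b 0)) * (T a b 0 * cnj (T' a b) + T' a b * cnj (T a b 0))
      + (T a b 0 * cnj (T' a b) + T' a b * cnj (T a b 0)) * (T a b 0 * cnj (T a b 0))))"
      unfolding G'_def by (rule norm_sum)
    also have "\<dots> \<le> (\<Sum>a\<in>S. \<Sum>b\<in>S. 4 * (x a b)^3 * y a b)"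
    proof (rule sum_mono)
      fix a assume "a \<in> S"
      show "cmod (\<Sum>b\<in>S. (T a b 0 * cnj (T a b 0)) * (T a b 0 * cnj (T' a b) + T' a b * cnj (T a b 0))
      + (T a b 0 * cnj (T' a b) + T' a b * cnj (T a b 0)) * (T a b 0 * cnj (T a b 0))) \<le> (\<Sum>b\<in>S. 4 * (x a b)^3 * y a b)"
        by (rule order_trans[OF norm_sum], rule sum_mono) (unfold x_def y_def, rule term_bound)
    qed
    finally show ?thesis .
  qed
  have c0: "0 \<le> c" unfolding c_def by simp
  have sd0: "0 < sqrt (real d)" using d1 by simp
  have "\<bar>0 - c * Re G'\<bar> = c * \<bar>Re G'\<bar>" using c0 by (simp add: abs_mult)
  also have "\<dots> \<le> c * cmod G'" using c0 abs_Re_le_cmod by (intro mult_left_mono) auto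
  also have "\<dots> \<le> c * (8 * (real d)^6 / sqrt (real d))"
    using c0 G'le bnd by (intro mult_left_mono) auto
  also have "\<dots> = 8 / sqrt (real d)" unfolding c_def using d1 by (simp add: field_simps)
  finally have bound: "\<bar>0 - c * Re G'\<bar> \<le> 8 / sqrt (real (dL ^ n))" unfolding d_def .
  show ?thesis unfolding Heq using Hd bound by blast
qed

end
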